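(* Let $\mathbb{F}$ be an algebraically closed field and let $n\ge 2$. Then there is no $n$-tuple $(B_1,\dots,B_n)$ of matrices in $M_n(\mathbb{F})$ that is strongly independent over $\mathbb{F}$.
   Context: An $n$-tuple $(B_1,\dots,B_n)$ of matrices in $M_n(\mathbb{F})$ is called strongly independent over $\mathbb{F}$ if for every nonzero column vector $v\in\mathbb{F}^{n\times 1}$, the vectors $B_1v,\dots,B_nv$ are linearly independent over $\mathbb{F}$. *)

theory Defs
  imports "HOL-Analysis.Analysis" "HOL-Computational_Algebra.Polynomial"
begin

definition lin_indep_family :: "('n::finite \<Rightarrow> 'a::field ^ 'm) \<Rightarrow> bool" where
  "lin_indep_family w \<longleftrightarrow> (\<forall>c :: 'n \<Rightarrow> 'a. (\<Sum>i\<in>UNIV. c i *s w i) = 0 \<longrightarrow> (\<forall>i. c i = 0))"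

definition strongly_independent :: "('n::finite \<Rightarrow> 'a::field ^ 'n ^ 'n) \<Rightarrow> bool" where
  "strongly_independent B \<longleftrightarrow> (\<forall>v :: 'a ^ 'n. v \<noteq> 0 \<longrightarrow> lin_indep_family (\<lambda>i. B i *v v))"

end

theory Submission
  imports Defs
begin

definition EP :: "'a::field^'n^'n \<Rightarrow> 'a poly \<Rightarrow> 'a^'n \<Rightarrow> 'a^'n" where
  "EP M p w = fold_coeffs (\<lambda>a acc. a *s w + M *v acc) p 0"

lemma EP_0[simp]: "EP M 0 w = 0"
  by (simp add: EP_def)

lemma EP_pCons[simp]: "EP M (pCons a p) w = a *s w + M *v EP M p w"
proof (cases "a = 0 \<and> p = 0")
  case True
  then show ?thesis by (simp add: EP_def)
next
  case False
  then show ?thesis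
    by (cases "p = 0") (auto simp: EP_def)
qed

lemma EP_add: "EP M (p + q) w = EP M p w + EP M q w"
  by (induction p q rule: poly_induct2) (auto simp: vec.add algebra_simps vector_sadd_rdistrib)

lemma EP_smult: "EP M (smult c p) w = c *s EP M p w"
  by (induction p) (auto simp: vec.scale vec.add algebra_simps vector_sadd_rdistrib vector_add_ldistrib)

lemma EP_uminus: "EP M (- p) w = - EP M p w"
  using EP_smult[of M "-1" p w] by simp

lemma EP_diff: "EP M (p - q) w = EP M p w - EP M q w"
  using EP_add[of M p "- q" w] EP_uminus[of M q w] by simp

lemma EP_wadd: "EP M p (u + v) = EP M p u + EP M p v"
  by (induction p) (auto simp: vec.add algebra_simps vector_add_ldistrib)

lemma EP_wscale: "EP M p (c *s u) = c *s EP M p u"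
  by (induction p) (auto simp: vec.add vec.scale algebra_simps vector_add_ldistrib)

lemma EP_comm: "EP M p (M *v u) = M *v EP M p u"
  by (induction p) (auto simp: vec.add vec.scale algebra_simps)

lemma EP_mult: "EP M (p * q) w = EP M p (EP M q w)"
  by (induction p) (auto simp: EP_add EP_smult EP_wadd EP_wscale EP_comm)

lemma EP_monom: "EP M (monom c k) w = c *s (((*v) M) ^^ k) w"
  by (induction k) (auto simp: monom_Suc monom_0 vec.scale)

lemma EP_sum: "finite S \<Longrightarrow> EP M (sum f S) w = (\<Sum>x\<in>S. EP M (f x) w)"
  by (induction S rule: finite_induct) (auto simp: EP_add)


lemma EP_one[simp]: "EP M 1 w = w"
  by (simp add: one_pCons)

lemma annihilate:
  fixes M :: "'a::field^'n^'n"
  shows "\<exists>p. p \<noteq> 0 \<and> EP M p w = 0"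
proof -
  define g where "g k = (((*v) M) ^^ k) w" for k
  define N where "N = CARD('n)"
  show ?thesis
  proof (cases "inj_on g {..N}")
    case False
    then obtain i j where ij: "i \<noteq> j" "g i = g j"
      unfolding inj_on_def by blast
    define p where "p = monom (1::'a) i - monom 1 j"
    have "coeff p i = 1" using ij by (simp add: p_def coeff_monom)
    then have "p \<noteq> 0" by auto
    moreover have "EP M p w = 0"
      unfolding p_def EP_diff EP_monom g_def[symmetric] using ij by simp
    ultimately show ?thesis by blast
  next
    case True
    define S where "S = g ` {..N}"
    have cS: "card S = Suc N" using True by (simp add: S_def card_image)
    have "vec.dependent S"
    proof (rule vec.dependent_biggerset_general)
      have "vec.dim S \<le> vec.dim (UNIV :: ('a^'n) set)"
        by (rule vec.dim_subset) simp
      also have "\<dots> = N" by (simp add: N_def card_cart_basis)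
      finally show "vec.dim S < card S" using cS by simp
    qed
    moreover have "finite S" by (simp add: S_def)
    ultimately obtain u where u: "(\<exists>v\<in>S. u v \<noteq> 0)" "(\<Sum>v\<in>S. u v *s v) = 0"
      using vec.dependent_finite by blast
    define p where "p = (\<Sum>k\<le>N. monom (u (g k)) k)"
    obtain v where v: "v \<in> S" "u v \<noteq> 0" using u by blast
    then obtain k where k: "k \<le> N" "v = g k" by (auto simp: S_def)
    have "coeff p k = (\<Sum>m\<le>N. if m = k then u (g m) else 0)"
      unfolding p_def coeff_sum coeff_monom by (rule sum.cong) auto
    also have "\<dots> = u (g k)" using k(1) by simp
    finally have "coeff p k = u (g k)" .
    then have "p \<noteq> 0" using v k by auto
    moreover have "EP M p w = (\<Sum>k\<le>N. u (g k) *s g k)"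
      unfolding p_def EP_sum[OF finite_atMost] EP_monom g_def[symmetric] ..
    moreover have "(\<Sum>k\<le>N. u (g k) *s g k) = (\<Sum>v\<in>S. u v *s v)"
      unfolding S_def using True by (simp add: sum.reindex)
    ultimately show ?thesis using u by auto
  qed
qed

lemma eigen_from_prod:
  fixes M :: "'a::field^'n^'n"
  shows "w \<noteq> 0 \<Longrightarrow> EP M (\<Prod>x\<in>#A. [:-x, 1:]) w = 0 \<Longrightarrow> \<exists>v l. v \<noteq> 0 \<and> M *v v = l *s v"
proof (induction A arbitrary: w)
  case empty
  then show ?case by simp
next
  case (add x A)
  define u where "u = EP M (\<Prod>x\<in>#A. [:-x, 1:]) w"
  show ?case
  proof (cases "u = 0")
    case True
    then show ?thesis using add unfolding u_def by blast
  next
    case False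
    have "EP M [:-x, 1:] u = 0"
      using add.prems(2) by (simp only: image_mset_add_mset prod_mset.add_mset EP_mult u_def)
    then have "- (x *s u) + M *v u = 0"
      by (simp add: vec.zero)
    then have "M *v u = x *s u"
      by (metis add.commute add_diff_cancel_left' diff_0 diff_add_cancel)
    then show ?thesis using False by blast
  qed
qed

lemma eigen_exists:
  fixes M :: "'a::alg_closed_field^'n^'n"
  shows "\<exists>v l. v \<noteq> 0 \<and> M *v v = l *s v"
proof -
  define w :: "'a^'n" where "w = vec 1"
  have w: "w \<noteq> 0" by (simp add: w_def vec_eq_iff)
  obtain p where p: "p \<noteq> 0" "EP M p w = 0" using annihilate by blast
  obtain A where A: "p = smult (lead_coeff p) (\<Prod>x\<in>#A. [:-x, 1:])"
    using alg_closed_imp_factorization[OF p(1)] by blast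
  have "lead_coeff p *s EP M (\<Prod>x\<in>#A. [:-x, 1:]) w = 0"
    using p(2) A EP_smult by metis
  then have "EP M (\<Prod>x\<in>#A. [:-x, 1:]) w = 0"
    using p(1) by simp
  then show ?thesis using eigen_from_prod w by blast
qed

theorem theorem1p6:
  assumes "CARD('n::finite) \<ge> 2"
  shows "\<not> (\<exists>B :: 'n \<Rightarrow> 'a::alg_closed_field ^ 'n ^ 'n. strongly_independent B)"
proof
  assume "\<exists>B :: 'n \<Rightarrow> 'a::alg_closed_field ^ 'n ^ 'n. strongly_independent B"
  then obtain B :: "'n \<Rightarrow> 'a ^ 'n ^ 'n" where SI: "strongly_independent B" by blast
  have S: "\<And>v c. v \<noteq> 0 \<Longrightarrow> (\<Sum>i\<in>UNIV. c i *s (B i *v v)) = 0 \<Longrightarrow> c i = 0" for i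
    using SI unfolding strongly_independent_def lin_indep_family_def by blast
  obtain i1 i2 :: 'n where i12: "i1 \<noteq> i2"
  proof -
    have "\<not> (\<forall>a b::'n. a = b)"
    proof
      assume "\<forall>a b::'n. a = b"
      then have "card (UNIV::'n set) \<le> Suc 0" using card_le_Suc0_iff_eq[OF finite, of "UNIV::'n set"] by blast
      then show False using assms by simp
    qed
    then show ?thesis using that by blast
  qed
  have inj: "B i1 *v v = 0 \<Longrightarrow> v = 0" for v
  proof (rule ccontr)
    assume "B i1 *v v = 0" "v \<noteq> 0"
    have "(\<Sum>i\<in>UNIV. (if i = i1 then 1 else 0) *s (B i *v v)) = 0"
    proof -
      have "(\<Sum>i\<in>UNIV. (if i = i1 then 1 else 0) *s (B i *v v)) = (\<Sum>i\<in>{i1}. (if i = i1 then 1 else 0) *s (B i *v v))"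
        by (rule sum.mono_neutral_right) auto
      then show ?thesis using \<open>B i1 *v v = 0\<close> by simp
    qed
    from S[OF \<open>v \<noteq> 0\<close> this, of i1] show False by simp
  qed
  have "\<exists>C. C ** B i1 = mat 1"
    unfolding matrix_left_invertible_ker using inj by blast
  then obtain C where C: "C ** B i1 = mat 1" by blast
  have C': "B i1 ** C = mat 1" by (subst matrix_left_right_inverse) (rule C)
  obtain v l where vl: "v \<noteq> 0" "(C ** B i2) *v v = l *s v"
    using eigen_exists by blast
  have "B i2 *v v = B i1 *v ((C ** B i2) *v v)"
    by (simp add: matrix_vector_mul_assoc matrix_mul_assoc C')
  also have "\<dots> = l *s (B i1 *v v)" using vl by (simp add: vec.scale)
  finally have eq: "B i2 *v v = l *s (B i1 *v v)" .
  define c where "c i = (if i = i1 then - l else if i = i2 then 1 else 0)" for i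
  have "(\<Sum>i\<in>UNIV. c i *s (B i *v v)) = (\<Sum>i\<in>{i1, i2}. c i *s (B i *v v))"
    by (rule sum.mono_neutral_right) (auto simp: c_def)
  also have "\<dots> = 0" using i12 eq by (simp add: c_def)
  finally have "c i2 = 0" using S[OF vl(1)] by blast
  then show False using i12 by (simp add: c_def)
qed

end
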